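(* An ordering of the features by modification cost does not in general determine which recourse is ideal. Precisely: there exist - a finite feature set $\mathcal{F}$, - a finite set $\mathcal{R}$ of pairwise disjoint nonempty recourses $R\subseteq\mathcal{F}$, - a recourse $R\in\mathcal{R}$, and - two strength assignments $\beta,\beta':\mathcal{F}\to\mathbb{R}$ that induce the same ordering of $\mathcal{F}$ (that is, $\beta_f<\beta_g \iff \beta'_f<\beta'_g$ for all $f,g\in\mathcal{F}$), such that $R$ is ideal with respect to $\mathcal{R}$ under $\beta$ but not ideal with respect to $\mathcal{R}$ under $\beta'$.
   Context: Let $\mathcal{F}$ be a finite set of features. A strength assignment is a function $\beta:\mathcal{F}\to\mathbb{R}$, written $f\mapsto\beta_f$. The cost of modifying feature $f$ is $\mathrm{Cost}(f)=-\beta_f$. For distinct $f,g\in\mathcal{F}$, the probability that $f$ is easier to modify than $g$ is given by the Bradley–Terry model: $$p_{f>g}=\frac{e^{\beta_f}}{e^{\beta_f}+e^{\beta_g}}.$$ A recourse is a nonempty subset $R\subseteq\mathcal{F}$ (the set of features it modifies). For disjoint recourses $R_1,R_2$ with $|R_1|=m$ and $|R_2|=n$, the probability that $R_1$ is easier to implement than $R_2$ is $$\rho_{R_1>R_2}=\frac{1}{mn}\sum_{f\in R_1,\,g\in R_2}p_{f>g}.$$ Given a finite set $\mathcal{R}$ of pairwise disjoint candidate recourses (for the same data instance) and $R\in\mathcal{R}$, $R$ is ideal with respect to $\mathcal{R}$ under $\beta$ if there is no $R'\in\mathcal{R}\setminus\{R\}$ with $\rho_{R>R'}<\rho_{R'>R}$.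 Otherwise $R$ is non-ideal. *)

theory Defs
  imports Complex_Main
begin

text \<open>Bradley--Terry probability that feature f is easier to modify than g.\<close>
definition p_easier :: "('f \<Rightarrow> real) \<Rightarrow> 'f \<Rightarrow> 'f \<Rightarrow> real" where
  "p_easier \<beta> f g = exp (\<beta> f) / (exp (\<beta> f) + exp (\<beta> g))"

definition rho :: "('f \<Rightarrow> real) \<Rightarrow> 'f set \<Rightarrow> 'f set \<Rightarrow> real" where
  "rho \<beta> R1 R2 = (1 / (real (card R1) * real (card R2))) *
     (\<Sum>f\<in>R1. \<Sum>g\<in>R2. p_easier \<beta> f g)"

definition ideal :: "('f \<Rightarrow> real) \<Rightarrow> 'f set set \<Rightarrow> 'f set \<Rightarrow> bool" where
  "ideal \<beta> RR R \<longleftrightarrow> \<not> (\<exists>R'\<in>RR - {R}. rho \<beta> R R' < rho \<beta> R' R)"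

end

theory Submission
  imports Defs
begin

lemma aux1: "(b::real) \<noteq> 0 \<Longrightarrow> a / b * (b * d) = a * d" by simp
lemma aux2: "(d::real) \<noteq> 0 \<Longrightarrow> a / d * (b * d) = a * b" by simp
lemma aux3: "(A::real) \<noteq> 0 \<Longrightarrow> B \<noteq> 0 \<Longrightarrow> (a/A + c/B)*(A*B) = a*B + c*A"
  by (simp add: distrib_right)
lemma aux4: "(A::real) \<noteq> 0 \<Longrightarrow> B \<noteq> 0 \<Longrightarrow> (a/B + c/A)*(A*B) = a*A + c*B"
  by (simp add: distrib_right)

lemma key: "x > (1::real) \<Longrightarrow> 2 / (1 + x*x) + x * 2 / (1 + x) < 2 / (1 + x) + 2 * (x*x) / (1 + x*x)"
proof -
  assume x: "x > 1"
  have p: "1 + x*x > 0" "1 + x > 0" using x by (auto simp: add_pos_pos)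
  have "(x - 1) * (x*x + 1) < (x - 1) * ((x + 1) * (x + 1))"
    using x by (intro mult_strict_left_mono) (auto simp: algebra_simps)
    have "(2 / (1 + x*x) + x * 2 / (1 + x)) * ((1+x*x)*(1+x)) = 2*(1+x) + x*2*(1+x*x)"
  proof -
    have "1 + x*x \<noteq> 0" "1 + x \<noteq> 0" using p by auto
    then show ?thesis using aux3[of "1+x*x" "1+x" 2 "x*2"] by simp
  qed
  moreover have "(2 / (1 + x) + 2 * (x*x) / (1 + x*x)) * ((1+x*x)*(1+x)) = 2*(1+x*x) + 2*(x*x)*(1+x)"
  proof -
    have "1 + x*x \<noteq> 0" "1 + x \<noteq> 0" using p by auto
    then show ?thesis using aux4[of "1+x*x" "1+x" 2 "2*(x*x)"] by simp
  qed
  moreover have "2*(1+x) + x*2*(1+x*x) < 2*(1+x*x) + 2*(x*x)*(1+x)"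
    using \<open>(x - 1) * (x*x + 1) < _\<close> by (simp add: algebra_simps)
  ultimately show ?thesis using p
    by (metis mult_less_cancel_right_pos mult_pos_pos)
qed

theorem theorem1:
  shows "\<exists>(F :: nat set) (RR :: nat set set) R (\<beta> :: nat \<Rightarrow> real) \<beta>'.
    finite F \<and> finite RR \<and>
    (\<forall>R'\<in>RR. R' \<noteq> {} \<and> R' \<subseteq> F) \<and>
    (\<forall>R1\<in>RR. \<forall>R2\<in>RR. R1 \<noteq> R2 \<longrightarrow> R1 \<inter> R2 = {}) \<and>
    R \<in> RR \<and>
    (\<forall>f\<in>F. \<forall>g\<in>F. \<beta> f < \<beta> g \<longleftrightarrow> \<beta>' f < \<beta>' g) \<and>
    ideal \<beta> RR R \<and> \<not> ideal \<beta>' RR R"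
proof -
  define b :: "nat \<Rightarrow> real" where "b = (\<lambda>n. if n = 0 then 0 else if n = 1 then -1 else 1)"
  define b' :: "nat \<Rightarrow> real" where "b' = (\<lambda>n. if n = 0 then 0 else if n = 1 then -1 else 2)"
  let ?F = "{0,1,2::nat}"
  let ?RR = "{{0},{1,2::nat}}"
  have ord: "\<forall>f\<in>?F. \<forall>g\<in>?F. b f < b g \<longleftrightarrow> b' f < b' g" by (auto simp: b_def b'_def)
  have e: "exp (1::real) > 0" by simp
  have i1: "ideal b ?RR {0}"
    unfolding ideal_def rho_def p_easier_def b_def
    using e by (simp add: exp_minus field_simps)
  have i2: "\<not> ideal b' ?RR {0}"
    unfolding ideal_def rho_def p_easier_def b'_def
    using e key[of "exp 1"] by (simp add: exp_minus field_simps exp_add[symmetric] mult_exp_exp)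
  show ?thesis
    apply (rule exI[of _ ?F], rule exI[of _ ?RR], rule exI[of _ "{0}"], rule exI[of _ b], rule exI[of _ b'])
    using ord i1 i2 by auto
qed

end
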